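(* Let $p$ be such that $p^*=\frac{p}{p-1}>0$, let $\alpha\in\mathbb{R}\setminus[1,2]$, and let $x_0\in(0,\infty)$. Set $a=\frac{\alpha-1}{(\alpha-2)p^*}$, $$K=\frac{a_{p,1}}{p^*}|\alpha-2|^{\frac{1}{\alpha-2}},\qquad s_0=K\,\Gamma\big(a,x_0^{p^*}\big).$$ Then the up transform of $g_{p,1}$, computed with the change of variable $s(x)=\int_x^{x_0}|(\alpha-2)v|^{\frac1{\alpha-2}}g_{p,1}(v)\,dv$, is $$\mathcal{U}_\alpha[g_{p,1}](s)=|\alpha-2|^{\frac{1}{2-\alpha}}\left|\Gamma^{-1}\!\left(a,\frac{s+s_0}{K}\right)\right|^{\frac{1}{p^*(2-\alpha)}}.$$
   Context: $g_{p,1}(x)=a_{p,1}e^{-x^{p^*}}$ for $x\in[0,\infty)$, with $a_{p,1}=\frac{p^*}{2\Gamma(1/p^* )}$ (the restriction to the half-line of the symmetric stretched Gaussian). $\Gamma(a,z)=\int_z^\infty w^{a-1}e^{-w}\,dw$ is the upper incomplete Gamma function and $\Gamma^{-1}(a,\cdot)$ denotes its inverse with respect to the second argument. Up transform: for $\alpha\ne2$, $\mathcal{U}_\alpha[f](s)=|(\alpha-2)x(s)|^{1/(2-\alpha)}$, where $x(s)$ is the inverse of the change of variable $s(x)$ (satisfying $s'(x)=-|(\alpha-2)x|^{1/(\alpha-2)}f(x)$). *)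

theory Defs
  imports "HOL-Analysis.Analysis"
begin

definition pstar :: "real \<Rightarrow> real" where
  "pstar p = p / (p - 1)"

definition a_p1 :: "real \<Rightarrow> real" where
  "a_p1 p = pstar p / (2 * Gamma (1 / pstar p))"

definition g_p1 :: "real \<Rightarrow> real \<Rightarrow> real" where
  "g_p1 p x = a_p1 p * exp (- (x powr pstar p))"

definition upper_inc_Gamma :: "real \<Rightarrow> real \<Rightarrow> real" where
  "upper_inc_Gamma a z = (LBINT w=ereal z..\<infinity>. w powr (a - 1) * exp (- w))"

definition inv_upper_inc_Gamma :: "real \<Rightarrow> real \<Rightarrow> real" where
  "inv_upper_inc_Gamma a y = (THE z. 0 \<le> z \<and> upper_inc_Gamma a z = y)"

definition up_cov :: "real \<Rightarrow> real \<Rightarrow> (real \<Rightarrow> real) \<Rightarrow> real \<Rightarrow> real" where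
  "up_cov \<alpha> x0 f x = (LBINT v=ereal x..ereal x0. \<bar>(\<alpha> - 2) * v\<bar> powr (1 / (\<alpha> - 2)) * f v)"

definition up_inv_cov :: "real \<Rightarrow> real \<Rightarrow> (real \<Rightarrow> real) \<Rightarrow> real \<Rightarrow> real" where
  "up_inv_cov \<alpha> x0 f s = (THE x. 0 < x \<and> up_cov \<alpha> x0 f x = s)"

definition up_transform :: "real \<Rightarrow> real \<Rightarrow> (real \<Rightarrow> real) \<Rightarrow> real \<Rightarrow> real" where
  "up_transform \<alpha> x0 f s = \<bar>(\<alpha> - 2) * up_inv_cov \<alpha> x0 f s\<bar> powr (1 / (2 - \<alpha>))"

end

theory Submission
  imports Defs
begin


lemma gam_int:
  fixes a :: real assumes a: "a > 0"
  shows "set_integrable lborel {0<..} (\<lambda>w. w powr (a - 1) * exp (- w))"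
proof -
  have "((\<lambda>t. t powr (a - 1) / exp t) has_integral Gamma a) {0..}"
    using Gamma_integral_real[OF a] .
  hence "(\<lambda>t. t powr (a - 1) * exp (- t)) integrable_on {0..}"
    by (auto simp add: exp_minus field_simps integrable_on_def)
  hence "(\<lambda>t. t powr (a - 1) * exp (- t)) absolutely_integrable_on {0..}"
    by (rule nonnegative_absolutely_integrable) auto
  hence "(\<lambda>t. t powr (a - 1) * exp (- t)) absolutely_integrable_on {0<..}"
    by (rule set_integrable_subset) auto
  thus ?thesis
    unfolding set_integrable_def
    by (subst (asm) integrable_completion) auto
qed



definition ff :: "real \<Rightarrow> real \<Rightarrow> real" where
  "ff a w = w powr (a - 1) * exp (- w)"

lemma F_split:
  fixes a c d :: real assumes a: "a > 0" and c: "c \<ge> 0" and d: "d \<ge> 0"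
  shows "(LBINT w=ereal c..ereal d. ff a w) + upper_inc_Gamma a d = upper_inc_Gamma a c"
proof -
  have "interval_lebesgue_integrable lborel (min (ereal c) (min (ereal d) \<infinity>)) (max (ereal c) (max (ereal d) \<infinity>)) (ff a)"
  proof -
    have int: "set_integrable lborel {0<..} (ff a)"
      using gam_int[OF a] by (simp add: ff_def[abs_def])
    have "set_integrable lborel {min c d<..} (ff a)"
      by (rule set_integrable_subset[OF int]) (use c d in auto)
    moreover have "{x. min (ereal c) (ereal d) < ereal x} = {min c d<..}"
      by (auto simp: min_def)
    ultimately show ?thesis
      by (simp add: interval_lebesgue_integrable_def einterval_def)
  qed
  from interval_integral_sum[OF this] show ?thesis
    unfolding upper_inc_Gamma_def ff_def by simp
qed

lemma int_pos:
  fixes a c d :: real assumes a: "a > 0" and c: "c \<ge> 0" and cd: "c < d"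
  shows "(LBINT w=ereal c..ereal d. ff a w) > 0"
proof -
  define m where "m = (c + d) / 2"
  have m: "0 < m" "c < m" "m < d" using c cd by (auto simp: m_def)
  have int: "set_integrable lborel {0<..} (ff a)"
    using gam_int[OF a] by (simp add: ff_def[abs_def])
  have "interval_lebesgue_integrable lborel (min (ereal c) (min (ereal m) (ereal d))) (max (ereal c) (max (ereal m) (ereal d))) (ff a)"
  proof -
    have "set_integrable lborel {c<..<d} (ff a)"
      by (rule set_integrable_subset[OF int]) (use c in auto)
    moreover have "{x. c < x \<and> x < d} = {c<..<d}" by auto
    ultimately show ?thesis using m cd
      by (simp add: interval_lebesgue_integrable_def einterval_def min_def max_def)
  qed
  from interval_integral_sum[OF this]
  have sum: "(LBINT w=ereal c..ereal m. ff a w) + (LBINT w=ereal m..ereal d. ff a w) = (LBINT w=ereal c..ereal d. ff a w)" .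
  have nn: "(LBINT w=ereal c..ereal m. ff a w) \<ge> 0"
    using m unfolding interval_lebesgue_integral_def set_lebesgue_integral_def
    by (auto intro!: integral_nonneg simp: ff_def indicator_def)
  have intm: "set_integrable lborel {m..d} (ff a)"
    by (rule set_integrable_subset[OF int]) (use m in auto)
  have cont: "continuous_on {m..d} (ff a)"
    unfolding ff_def using m by (auto intro!: continuous_intros)
  have "(LBINT w=ereal m..ereal d. ff a w) = integral {m..d} (ff a)"
    using m by (simp add: interval_integral_Icc set_borel_integral_eq_integral(2)[OF intm])
  also have "integral {m..d} (\<lambda>_. 0) < integral {m..d} (ff a)"
    by (rule integral_less_real) (use m cont in \<open>auto simp: ff_def\<close>)
  finally have "(LBINT w=ereal m..ereal d. ff a w) > 0" by simp
  with nn sum show ?thesis by linarith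
qed

lemma F_inj:
  fixes a z1 z2 :: real assumes a: "a > 0" and "z1 \<ge> 0" "z2 \<ge> 0"
    and eq: "upper_inc_Gamma a z1 = upper_inc_Gamma a z2"
  shows "z1 = z2"
proof (rule ccontr)
  assume ne: "z1 \<noteq> z2"
  have *: "upper_inc_Gamma a u \<noteq> upper_inc_Gamma a v" if "0 \<le> u" "u < v" for u v
  proof -
    have "(LBINT w=ereal u..ereal v. ff a w) + upper_inc_Gamma a v = upper_inc_Gamma a u"
      using F_split[OF a, of u v] that by simp
    moreover have "(LBINT w=ereal u..ereal v. ff a w) > 0" using int_pos[OF a that] .
    ultimately show ?thesis by linarith
  qed
  show False
  proof (cases "z1 < z2")
    case True thus False using *[of z1 z2] eq assms(2) by simp
  next
    case False hence "z2 < z1" using ne by simp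
    thus False using *[of z2 z1] eq assms(3) by simp
  qed
qed

lemma F_inv:
  fixes a t :: real assumes a: "a > 0" and t: "t \<ge> 0"
  shows "inv_upper_inc_Gamma a (upper_inc_Gamma a t) = t"
  unfolding inv_upper_inc_Gamma_def
  by (rule the_equality) (use t F_inj[OF a] in auto)



lemma pt_ident:
  fixes q al a K t :: real
  assumes q: "q > 0" and al: "al \<noteq> 2" and t: "t > 0"
    and adef: "a = (al - 1) / ((al - 2) * q)"
    and Kdef: "K = (A / q) * \<bar>al - 2\<bar> powr (1 / (al - 2))"
  shows "\<bar>(al - 2) * t\<bar> powr (1 / (al - 2)) * (A * exp (- (t powr q)))
       = (q * t powr (q - 1)) *\<^sub>R (K * ff a (t powr q))"
proof -
  have al2: "al - 2 \<noteq> 0" using al by simp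
  have qa: "q * a = (al - 1) / (al - 2)" unfolding adef using q al2 by (simp add: field_simps)
  have e: "(q - 1) + q * (a - 1) = 1 / (al - 2)"
  proof -
    have "(q - 1) + q * (a - 1) = q * a - 1" by (simp add: algebra_simps)
    also have "\<dots> = (al - 1) / (al - 2) - 1" by (simp add: qa)
    also have "\<dots> = 1 / (al - 2)" using al2 by (simp add: field_simps)
    finally show ?thesis .
  qed
  have "t powr (q - 1) * (t powr q) powr (a - 1) = t powr (1 / (al - 2))"
    using t by (simp add: powr_powr e[symmetric] powr_add)
  moreover have "\<bar>(al - 2) * t\<bar> powr (1 / (al - 2)) = \<bar>al - 2\<bar> powr (1 / (al - 2)) * t powr (1 / (al - 2))"
    using t by (simp add: abs_mult powr_mult)
  ultimately show ?thesis
    using q unfolding ff_def Kdef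
    by (simp add: field_simps)
qed

lemma subst_lem:
  fixes q al a K u v A :: real
  assumes q: "q > 0" and al: "al \<noteq> 2" and u: "u > 0" and uv: "u \<le> v"
    and adef: "a = (al - 1) / ((al - 2) * q)"
    and Kdef: "K = (A / q) * \<bar>al - 2\<bar> powr (1 / (al - 2))"
  shows "(LBINT t=ereal u..ereal v. \<bar>(al - 2) * t\<bar> powr (1 / (al - 2)) * (A * exp (- (t powr q))))
       = K * (LBINT w=ereal (u powr q)..ereal (v powr q). ff a w)"
proof -
  have "(LBINT t=ereal u..ereal v. \<bar>(al - 2) * t\<bar> powr (1 / (al - 2)) * (A * exp (- (t powr q))))
      = (LBINT t=ereal u..ereal v. (q * t powr (q - 1)) *\<^sub>R (K * ff a (t powr q)))"
  proof (rule interval_integral_cong)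
    fix t assume "t \<in> einterval (min (ereal u) (ereal v)) (max (ereal u) (ereal v))"
    have "min (ereal u) (ereal v) = ereal u" using uv by simp
    hence "ereal u < ereal t" using \<open>t \<in> einterval _ _\<close> by (simp add: einterval_iff)
    hence "t > 0" using u by simp
    thus "\<bar>(al - 2) * t\<bar> powr (1 / (al - 2)) * (A * exp (- (t powr q)))
       = (q * t powr (q - 1)) *\<^sub>R (K * ff a (t powr q))"
      by (rule pt_ident[OF q al _ adef Kdef])
  qed
  also have "\<dots> = (LBINT w=ereal (u powr q)..ereal (v powr q). K * ff a w)"
  proof (rule interval_integral_substitution_finite[OF uv, where g="\<lambda>t. t powr q"
        and g'="\<lambda>t. q * t powr (q - 1)" and f="\<lambda>w. K * ff a w"])
    fix t assume "u \<le> t" "t \<le> v"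
    hence "t > 0" using u by simp
    thus "((\<lambda>t. t powr q) has_real_derivative q * t powr (q - 1)) (at t within {u..v})"
      by (rule has_field_derivative_at_within[OF has_real_derivative_powr])
  next
    have "(\<lambda>t. t powr q) ` {u..v} \<subseteq> {0<..}" using u by auto
    moreover have "continuous_on {0<..} (\<lambda>w. K * ff a w)"
      unfolding ff_def
      by (intro continuous_on_mult continuous_on_const continuous_on_powr continuous_on_id
            continuous_on_exp continuous_on_minus) auto
    ultimately show "continuous_on ((\<lambda>t. t powr q) ` {u..v}) (\<lambda>w. K * ff a w)"
      by (rule continuous_on_subset[rotated])
  next
    show "continuous_on {u..v} (\<lambda>t. q * t powr (q - 1))"
      using u by (intro continuous_on_mult continuous_on_const continuous_on_powr continuous_on_id) auto
  qed
  also have "\<dots> = K * (LBINT w=ereal (u powr q)..ereal (v powr q). ff a w)"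
    by simp
  finally show ?thesis .
qed



theorem proposition11:
  fixes p \<alpha> x0 :: real
  assumes hp: "pstar p > 0"
    and h\<alpha>: "\<alpha> \<notin> {1..2}"
    and hx0: "x0 > 0"
  shows "\<forall>s \<in> up_cov \<alpha> x0 (g_p1 p) ` {0<..}.
    up_transform \<alpha> x0 (g_p1 p) s =
      \<bar>\<alpha> - 2\<bar> powr (1 / (2 - \<alpha>)) *
      \<bar>inv_upper_inc_Gamma ((\<alpha> - 1) / ((\<alpha> - 2) * pstar p))
          ((s + (a_p1 p / pstar p) * \<bar>\<alpha> - 2\<bar> powr (1 / (\<alpha> - 2))
                 * upper_inc_Gamma ((\<alpha> - 1) / ((\<alpha> - 2) * pstar p)) (x0 powr pstar p))
           / ((a_p1 p / pstar p) * \<bar>\<alpha> - 2\<bar> powr (1 / (\<alpha> - 2))))\<bar>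
        powr (1 / (pstar p * (2 - \<alpha>)))"
proof
  define q where "q = pstar p"
  define a where "a = (\<alpha> - 1) / ((\<alpha> - 2) * q)"
  define K where "K = (a_p1 p / q) * \<bar>\<alpha> - 2\<bar> powr (1 / (\<alpha> - 2))"
  define F where "F = upper_inc_Gamma a"
  have q: "q > 0" using hp by (simp add: q_def)
  have al: "\<alpha> \<noteq> 2" using h\<alpha> by auto
  have "(\<alpha> - 1) / (\<alpha> - 2) > 0"
    using h\<alpha> by (auto simp: zero_less_divide_iff)
  hence apos: "a > 0" unfolding a_def using q
    by (metis divide_divide_eq_left divide_pos_pos)
  have ap1: "a_p1 p > 0" unfolding a_p1_def using hp by simp
  have Kpos: "K > 0" unfolding K_def using ap1 q al by simp
  have cov: "up_cov \<alpha> x0 (g_p1 p) y = K * (F (y powr q) - F (x0 powr q))" if y: "y > 0" for y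
  proof (cases "y \<le> x0")
    case True
    have "up_cov \<alpha> x0 (g_p1 p) y = K * (LBINT w=ereal (y powr q)..ereal (x0 powr q). ff a w)"
      unfolding up_cov_def g_p1_def q_def[symmetric]
      by (rule subst_lem[OF q al y True a_def K_def])
    also have "(LBINT w=ereal (y powr q)..ereal (x0 powr q). ff a w) = F (y powr q) - F (x0 powr q)"
      using F_split[OF apos, of "y powr q" "x0 powr q"] unfolding F_def by simp
    finally show ?thesis .
  next
    case False
    hence le: "x0 \<le> y" by simp
    have "up_cov \<alpha> x0 (g_p1 p) y = - (LBINT v=ereal x0..ereal y. \<bar>(\<alpha> - 2) * v\<bar> powr (1 / (\<alpha> - 2)) * g_p1 p v)"
      unfolding up_cov_def by (rule interval_integral_endpoints_reverse)
    also have "(LBINT v=ereal x0..ereal y. \<bar>(\<alpha> - 2) * v\<bar> powr (1 / (\<alpha> - 2)) * g_p1 p v)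
        = K * (LBINT w=ereal (x0 powr q)..ereal (y powr q). ff a w)"
      unfolding g_p1_def q_def[symmetric]
      by (rule subst_lem[OF q al hx0 le a_def K_def])
    also have "(LBINT w=ereal (x0 powr q)..ereal (y powr q). ff a w) = F (x0 powr q) - F (y powr q)"
      using F_split[OF apos, of "x0 powr q" "y powr q"] unfolding F_def by simp
    finally show ?thesis by (simp add: algebra_simps)
  qed
  fix s assume "s \<in> up_cov \<alpha> x0 (g_p1 p) ` {0<..}"
  then obtain x where x: "x > 0" and sx: "s = up_cov \<alpha> x0 (g_p1 p) x" by auto
  have "(s + K * F (x0 powr q)) / K = F (x powr q)"
    using cov[OF x] sx Kpos by (simp add: field_simps)
  hence inv: "inv_upper_inc_Gamma a ((s + K * F (x0 powr q)) / K) = x powr q"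
    using F_inv[OF apos, of "x powr q"] unfolding F_def by simp
  have xs: "up_inv_cov \<alpha> x0 (g_p1 p) s = x"
    unfolding up_inv_cov_def
  proof (rule the_equality)
    show "0 < x \<and> up_cov \<alpha> x0 (g_p1 p) x = s" using x sx by simp
  next
    fix y assume y: "0 < y \<and> up_cov \<alpha> x0 (g_p1 p) y = s"
    have s1: "s = K * (F (y powr q) - F (x0 powr q))" using cov[of y] y by simp
    have s2: "s = K * (F (x powr q) - F (x0 powr q))" using cov[OF x] sx by simp
    have "K * F (y powr q) = K * F (x powr q)" using s1 s2 unfolding right_diff_distrib by linarith
    hence "F (y powr q) = F (x powr q)" using Kpos by simp
    hence "y powr q = x powr q" using F_inj[OF apos] unfolding F_def by simp
    hence "(y powr q) powr (1 / q) = (x powr q) powr (1 / q)" by simp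
    thus "y = x" using q x y by (simp add: powr_powr)
  qed
  have "up_transform \<alpha> x0 (g_p1 p) s = \<bar>(\<alpha> - 2) * x\<bar> powr (1 / (2 - \<alpha>))"
    unfolding up_transform_def xs ..
  also have "\<dots> = \<bar>\<alpha> - 2\<bar> powr (1 / (2 - \<alpha>)) * x powr (1 / (2 - \<alpha>))"
    using x by (simp only: abs_mult powr_mult abs_ge_zero abs_of_pos)
  also have "x powr (1 / (2 - \<alpha>)) = \<bar>x powr q\<bar> powr (1 / (q * (2 - \<alpha>)))"
  proof -
    have "\<bar>x powr q\<bar> powr (1 / (q * (2 - \<alpha>))) = x powr (q * (1 / (q * (2 - \<alpha>))))"
      by (simp add: powr_powr)
    also have "q * (1 / (q * (2 - \<alpha>))) = 1 / (2 - \<alpha>)" using q by simp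
    finally show ?thesis by simp
  qed
  also have "x powr q = inv_upper_inc_Gamma a ((s + K * F (x0 powr q)) / K)"
    using inv by simp
  finally show "up_transform \<alpha> x0 (g_p1 p) s =
      \<bar>\<alpha> - 2\<bar> powr (1 / (2 - \<alpha>)) *
      \<bar>inv_upper_inc_Gamma ((\<alpha> - 1) / ((\<alpha> - 2) * pstar p))
          ((s + (a_p1 p / pstar p) * \<bar>\<alpha> - 2\<bar> powr (1 / (\<alpha> - 2))
                 * upper_inc_Gamma ((\<alpha> - 1) / ((\<alpha> - 2) * pstar p)) (x0 powr pstar p))
           / ((a_p1 p / pstar p) * \<bar>\<alpha> - 2\<bar> powr (1 / (\<alpha> - 2))))\<bar>
        powr (1 / (pstar p * (2 - \<alpha>)))"
    unfolding a_def K_def F_def q_def .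
qed

end
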